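(* There is a simple set that is $D$-w.e.u.
   Context: $\varphi_0,\varphi_1,\ldots$ is a standard acceptable enumeration of the partial computable functions $\mathbb{N}\to\mathbb{N}$, $\mathcal{W}_e=\operatorname{dom}\varphi_e$, $\mathbb{1}_A$ the characteristic function of $A$, $\overline{A}=\mathbb{N}\setminus A$. A recursively enumerable $A$ is simple if $\overline{A}$ is infinite and contains no infinite recursively enumerable subset. $\mathfrak{P}_{\mathrm{fin}}(\mathbb{N})$ is the set of finite subsets of $\mathbb{N}$; $f\colon\mathbb{N}\to\mathfrak{P}_{\mathrm{fin}}(\mathbb{N})$ is computable if $e\mapsto$ (canonical index of $f(e)$) is computable. A recursively enumerable $A$ is $D$-w.e.u. if there is a computable $f\colon\mathbb{N}\to\mathfrak{P}_{\mathrm{fin}}(\mathbb{N})$ such that for all $e$: if $\varphi_e(z)$ is defined for all $z\in f(e)$, then there is $z\in f(e)$ with $\varphi_e(z)\neq\mathbb{1}_A(z)$. *)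

theory Defs
  imports Main "HOL-Library.Nat_Bijection"
begin

text \<open>Codes of unary partial recursive functions on nat, using Cantor pairing
  (prod_encode / prod_decode) to handle several arguments.\<close>

datatype recf =
    Zero
  | Succ
  | Ident
  | Fst
  | Snd
  | Pair recf recf
  | Comp recf recf
  | PrimRec recf recf
  | Mu recf

definition pr :: "nat \<Rightarrow> nat \<Rightarrow> nat" where "pr a b = prod_encode (a, b)"

inductive eval :: "recf \<Rightarrow> nat \<Rightarrow> nat \<Rightarrow> bool" where
  "eval Zero x 0"
| "eval Succ x (Suc x)"
| "eval Ident x x"
| "eval Fst (pr a b) a"
| "eval Snd (pr a b) b"
| "eval f x y \<Longrightarrow> eval g x z \<Longrightarrow> eval (Pair f g) x (pr y z)"
| "eval g x y \<Longrightarrow> eval f y z \<Longrightarrow> eval (Comp f g) x z"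
| "eval f x y \<Longrightarrow> eval (PrimRec f g) (pr x 0) y"
| "eval (PrimRec f g) (pr x n) y \<Longrightarrow> eval g (pr x (pr n y)) z
     \<Longrightarrow> eval (PrimRec f g) (pr x (Suc n)) z"
| "eval f (pr x n) 0 \<Longrightarrow> (\<forall>m<n. \<exists>k. eval f (pr x m) (Suc k))
     \<Longrightarrow> eval (Mu f) x n"

text \<open>Bijective Goedel numbering of codes: atoms 0..4, compound codes 5 + 4k + tag.\<close>

primrec encode :: "recf \<Rightarrow> nat" where
  "encode Zero = 0"
| "encode Succ = 1"
| "encode Ident = 2"
| "encode Fst = 3"
| "encode Snd = 4"
| "encode (Pair f g) = 5 + 4 * prod_encode (encode f, encode g)"
| "encode (Comp f g) = 5 + 4 * prod_encode (encode f, encode g) + 1"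
| "encode (PrimRec f g) = 5 + 4 * prod_encode (encode f, encode g) + 2"
| "encode (Mu f) = 5 + 4 * encode f + 3"

lemma prod_decode_le: "fst (prod_decode k) \<le> k" "snd (prod_decode k) \<le> k"
proof -
  obtain a b where ab: "prod_decode k = (a, b)" by (cases "prod_decode k")
  hence k: "k = prod_encode (a, b)" by (metis prod_decode_inverse)
  show "fst (prod_decode k) \<le> k" "snd (prod_decode k) \<le> k"
    using ab k le_prod_encode_1 le_prod_encode_2 by auto
qed

function decode :: "nat \<Rightarrow> recf" where
  "decode n =
    (if n = 0 then Zero else if n = 1 then Succ else if n = 2 then Ident
     else if n = 3 then Fst else if n = 4 then Snd
     else (let m = n - 5; k = m div 4; t = m mod 4 in
       if t = 0 then Pair (decode (fst (prod_decode k))) (decode (snd (prod_decode k)))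
       else if t = 1 then Comp (decode (fst (prod_decode k))) (decode (snd (prod_decode k)))
       else if t = 2 then PrimRec (decode (fst (prod_decode k))) (decode (snd (prod_decode k)))
       else Mu (decode k)))"
  by auto
termination
proof (relation "measure id", goal_cases)
  case 1 show ?case by simp
next
  case (2 n m k t) then show ?case
    using prod_decode_le(1)[of "(n - 5) div 4"] by (simp add: Let_def) linarith
next
  case (3 n m k t) then show ?case
    using prod_decode_le(2)[of "(n - 5) div 4"] by (simp add: Let_def) linarith
next
  case (4 n m k t) then show ?case
    using prod_decode_le(1)[of "(n - 5) div 4"] by (simp add: Let_def) linarith
next
  case (5 n m k t) then show ?case
    using prod_decode_le(2)[of "(n - 5) div 4"] by (simp add: Let_def) linarith
next
  case (6 n m k t) then show ?case
    using prod_decode_le(1)[of "(n - 5) div 4"] by (simp add: Let_def) linarith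
next
  case (7 n m k t) then show ?case
    using prod_decode_le(2)[of "(n - 5) div 4"] by (simp add: Let_def) linarith
next
  case (8 n m k t) then show ?case by (simp add: Let_def) linarith
qed

definition phi :: "nat \<Rightarrow> nat \<Rightarrow> nat option" where
  "phi e x = (if \<exists>y. eval (decode e) x y then Some (THE y. eval (decode e) x y) else None)"

definition W :: "nat \<Rightarrow> nat set" where
  "W e = dom (phi e)"

definition re :: "nat set \<Rightarrow> bool" where
  "re A \<longleftrightarrow> (\<exists>e. A = W e)"

definition simple :: "nat set \<Rightarrow> bool" where
  "simple A \<longleftrightarrow> re A \<and> infinite (- A) \<and> (\<forall>e. W e \<subseteq> - A \<longrightarrow> finite (W e))"

text \<open>Canonical index of a finite set: \<open>D_n = {i. bit i of n is 1}\<close>.\<close>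

definition canon_index :: "nat set \<Rightarrow> nat" where
  "canon_index D = (\<Sum>i\<in>D. 2 ^ i)"

definition computable_total :: "(nat \<Rightarrow> nat) \<Rightarrow> bool" where
  "computable_total g \<longleftrightarrow> (\<exists>e. \<forall>x. phi e x = Some (g x))"

definition computable_fin :: "(nat \<Rightarrow> nat set) \<Rightarrow> bool" where
  "computable_fin f \<longleftrightarrow> (\<forall>e. finite (f e)) \<and> computable_total (\<lambda>e. canon_index (f e))"

definition D_weu :: "nat set \<Rightarrow> bool" where
  "D_weu A \<longleftrightarrow> re A \<and>
     (\<exists>f. computable_fin f \<and>
        (\<forall>e. (\<forall>z\<in>f e. phi e z \<noteq> None) \<longrightarrow>
             (\<exists>z\<in>f e. phi e z \<noteq> Some (if z \<in> A then 1 else 0))))"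

end

theory Submission
  imports Defs
begin

definition p1 :: "nat \<Rightarrow> nat" where "p1 x = fst (prod_decode x)"
definition p2 :: "nat \<Rightarrow> nat" where "p2 x = snd (prod_decode x)"

lemma p1_pr[simp]: "p1 (pr a b) = a" by (simp add: p1_def pr_def)
lemma p2_pr[simp]: "p2 (pr a b) = b" by (simp add: p2_def pr_def)
lemma pr_p[simp]: "pr (p1 x) (p2 x) = x" by (simp add: p1_def p2_def pr_def)
lemma pr_inj[simp]: "pr a b = pr c d \<longleftrightarrow> a = c \<and> b = d"
  by (simp add: pr_def prod_encode_eq)

lemma eval_det: "eval r x y \<Longrightarrow> eval r x y' \<Longrightarrow> y = y'"
proof (induction arbitrary: y' rule: eval.induct)
  case (10 f x n)
  from 10(4) obtain n' where n': "y' = n'" "eval f (pr x n') 0" "\<forall>m<n'. \<exists>k. eval f (pr x m) (Suc k)"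
    by (cases rule: eval.cases) auto
  show ?case
  proof (rule ccontr)
    assume "n \<noteq> y'"
    then consider "n < n'" | "n' < n" using n' by linarith
    then show False
    proof cases
      case 1
      with n' obtain k where "eval f (pr x n) (Suc k)" by auto
      with 10(2) show False by (metis nat.distinct(1))
    next
      case 2
      with 10(3) obtain k where "\<forall>y''. eval f (pr x n') y'' \<longrightarrow> Suc k = y''" by blast
      with n'(2) show False by (metis nat.distinct(1))
    qed
  qed
next
  case (9 f g x n y z)
  from 9(5) show ?case
  proof (cases rule: eval.cases)
    case (9 x' n' y'')
    then have "x' = x" "n' = n" by auto
    with 9 have "y'' = y" using \<open>\<And>y'. eval (PrimRec f g) (pr x n) y' \<Longrightarrow> y = y'\<close> by auto
    with 9 \<open>x' = x\<close> \<open>n' = n\<close> show ?thesis using \<open>\<And>y'. eval g (pr x (pr n y)) y' \<Longrightarrow> z = y'\<close> by auto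
  qed auto
next
  case (1 x) then show ?case by (cases rule: eval.cases) auto
next
  case (2 x) then show ?case by (cases rule: eval.cases) auto
next
  case (3 x) then show ?case by (cases rule: eval.cases) auto
next
  case (4 a b) then show ?case by (cases rule: eval.cases) auto
next
  case (5 a b) then show ?case by (cases rule: eval.cases) auto
next
  case (6 f x y g z)
  from 6(5) show ?case by (cases rule: eval.cases) (use 6 in auto)
next
  case (7 g x y f z)
  from 7(5) obtain y2 where "eval g x y2" "eval f y2 y'" by (cases rule: eval.cases) auto
  then show ?case using 7 by metis
next
  case (8 f x y g)
  from 8(3) show ?case by (cases rule: eval.cases) (use 8(2) in auto)
qed

definition comp1 :: "(nat \<Rightarrow> nat) \<Rightarrow> bool" where
  "comp1 g \<longleftrightarrow> (\<exists>r. \<forall>x. eval r x (g x))"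

lemma c1_zero: "comp1 (\<lambda>x. 0)"
  unfolding comp1_def by (rule exI[of _ Zero]) (auto intro: eval.intros)

lemma c1_id: "comp1 (\<lambda>x. x)"
  unfolding comp1_def by (rule exI[of _ Ident]) (auto intro: eval.intros)

lemma c1_Suc0: "comp1 Suc"
  unfolding comp1_def by (rule exI[of _ Succ]) (auto intro: eval.intros)

lemma c1_p1_0: "comp1 p1"
  unfolding comp1_def
proof (rule exI[of _ Fst], rule allI)
  fix x have "eval Fst (pr (p1 x) (p2 x)) (p1 x)" by (rule eval.intros)
  then show "eval Fst x (p1 x)" by simp
qed

lemma c1_p2_0: "comp1 p2"
  unfolding comp1_def
proof (rule exI[of _ Snd], rule allI)
  fix x have "eval Snd (pr (p1 x) (p2 x)) (p2 x)" by (rule eval.intros)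
  then show "eval Snd x (p2 x)" by simp
qed

lemma c1_comp: "comp1 f \<Longrightarrow> comp1 g \<Longrightarrow> comp1 (\<lambda>x. f (g x))"
  unfolding comp1_def by (auto intro: eval.intros)

lemma c1_pr: "comp1 f \<Longrightarrow> comp1 g \<Longrightarrow> comp1 (\<lambda>x. pr (f x) (g x))"
  unfolding comp1_def by (metis eval.intros(6))

lemma c1_prec:
  assumes "comp1 f" "comp1 g"
    and h0: "\<And>x. h x 0 = f x" and hS: "\<And>x n. h x (Suc n) = g (pr x (pr n (h x n)))"
  shows "comp1 (\<lambda>p. h (p1 p) (p2 p))"
proof -
  from assms(1,2) obtain rf rg where rf: "\<And>x. eval rf x (f x)" and rg: "\<And>x. eval rg x (g x)"
    unfolding comp1_def by blast
  have "eval (PrimRec rf rg) (pr x n) (h x n)" for x n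
  proof (induction n)
    case 0 then show ?case using rf h0 by (auto intro: eval.intros)
  next
    case (Suc n) then show ?case using rg hS by (auto intro: eval.intros)
  qed
  then have "eval (PrimRec rf rg) p (h (p1 p) (p2 p))" for p
    by (metis pr_p)
  then show ?thesis unfolding comp1_def by blast
qed

lemma c1_const: "comp1 (\<lambda>x. c)"
proof (induction c)
  case 0 then show ?case by (rule c1_zero)
next
  case (Suc c) then show ?case using c1_comp[OF c1_Suc0] by auto
qed

lemma c1_Suc: "comp1 f \<Longrightarrow> comp1 (\<lambda>x. Suc (f x))"
  using c1_comp[OF c1_Suc0] by auto

lemma c1_p1: "comp1 f \<Longrightarrow> comp1 (\<lambda>x. p1 (f x))"
  using c1_comp[OF c1_p1_0] by auto

lemma c1_p2: "comp1 f \<Longrightarrow> comp1 (\<lambda>x. p2 (f x))"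
  using c1_comp[OF c1_p2_0] by auto

lemma c1_comp2: "comp1 (\<lambda>p. h (p1 p) (p2 p)) \<Longrightarrow> comp1 f \<Longrightarrow> comp1 g \<Longrightarrow> comp1 (\<lambda>x. h (f x) (g x))"
  using c1_comp[of "\<lambda>p. h (p1 p) (p2 p)" "\<lambda>x. pr (f x) (g x)"] c1_pr by auto

lemma c1_add: "comp1 f \<Longrightarrow> comp1 g \<Longrightarrow> comp1 (\<lambda>x. f x + g x)"
proof -
  have "comp1 (\<lambda>p. p1 p + p2 p)"
    by (rule c1_prec[where f="\<lambda>x. x" and g="\<lambda>q. Suc (p2 (p2 q))"])
       (intro c1_id c1_Suc c1_p2 | simp)+
  then show "comp1 f \<Longrightarrow> comp1 g \<Longrightarrow> comp1 (\<lambda>x. f x + g x)"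
    by (rule c1_comp2[where h="(+)"])
qed

lemma c1_mult: "comp1 f \<Longrightarrow> comp1 g \<Longrightarrow> comp1 (\<lambda>x. f x * g x)"
proof -
  have "comp1 (\<lambda>p. p1 p * p2 p)"
    by (rule c1_prec[where f="\<lambda>x. 0" and g="\<lambda>q. p2 (p2 q) + p1 q"])
       (intro c1_const c1_add c1_p1 c1_p2 c1_id | simp add: algebra_simps)+
  then show "comp1 f \<Longrightarrow> comp1 g \<Longrightarrow> comp1 (\<lambda>x. f x * g x)"
    by (rule c1_comp2[where h="(*)"])
qed

lemma c1_pred: "comp1 f \<Longrightarrow> comp1 (\<lambda>x. f x - 1)"
proof -
  have "comp1 (\<lambda>p. (\<lambda>x n. n - 1) (p1 p) (p2 p))"
    by (rule c1_prec[where f="\<lambda>x. 0" and g="\<lambda>q. p1 (p2 q)"])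
       (intro c1_const c1_p1 c1_p2 c1_id | simp)+
  from c1_comp2[OF this c1_const] show "comp1 f \<Longrightarrow> comp1 (\<lambda>x. f x - 1)" by simp
qed

lemma c1_minus: "comp1 f \<Longrightarrow> comp1 g \<Longrightarrow> comp1 (\<lambda>x. f x - g x)"
proof -
  have "comp1 (\<lambda>p. p1 p - p2 p)"
    by (rule c1_prec[where f="\<lambda>x. x" and g="\<lambda>q. p2 (p2 q) - 1"])
       (intro c1_id c1_pred c1_p2 | simp)+
  then show "comp1 f \<Longrightarrow> comp1 g \<Longrightarrow> comp1 (\<lambda>x. f x - g x)"
    by (rule c1_comp2[where h="(-)"])
qed

lemma c1_pow2: "comp1 f \<Longrightarrow> comp1 (\<lambda>x. 2 ^ f x)"
proof -
  have "comp1 (\<lambda>p. (\<lambda>x n. 2 ^ n) (p1 p) (p2 p))"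
    by (rule c1_prec[where f="\<lambda>x. 1" and g="\<lambda>q. p2 (p2 q) + p2 (p2 q)"])
       (intro c1_const c1_add c1_p2 c1_id | simp)+
  from c1_comp2[OF this c1_const] show "comp1 f \<Longrightarrow> comp1 (\<lambda>x. 2 ^ f x)" by simp
qed

lemma c1_sum:
  assumes h: "comp1 (\<lambda>p. h (p1 p) (p2 p))" and k: "comp1 k"
  shows "comp1 (\<lambda>x. \<Sum>i<k x. h x i)"
proof -
  have g: "comp1 (\<lambda>q. p2 (p2 q) + h (p1 q) (p1 (p2 q)))"
    by (intro c1_add c1_p2 c1_id c1_comp2[OF h] c1_p1)
  have "comp1 (\<lambda>p. (\<lambda>x n. \<Sum>i<n. h x i) (p1 p) (p2 p))"
    by (rule c1_prec[OF c1_const g]) auto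
  from c1_comp2[OF this c1_id k] show ?thesis by simp
qed

definition compP :: "(nat \<Rightarrow> bool) \<Rightarrow> bool" where
  "compP P \<longleftrightarrow> comp1 (\<lambda>x. if P x then 1 else 0)"

lemma c1_if: "compP P \<Longrightarrow> comp1 f \<Longrightarrow> comp1 g \<Longrightarrow> comp1 (\<lambda>x. if P x then f x else g x)"
proof -
  assume "compP P" "comp1 f" "comp1 g"
  then have "comp1 (\<lambda>x. (if P x then 1 else 0) * f x + (1 - (if P x then 1 else 0)) * g x)"
    unfolding compP_def by (intro c1_add c1_mult c1_minus c1_const)
  moreover have "(\<lambda>x. (if P x then 1 else 0) * f x + (1 - (if P x then 1 else 0)) * g x) = (\<lambda>x. if P x then f x else g x)"
    by (rule ext) simp
  ultimately show ?thesis by simp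
qed

lemma cP_eq: "comp1 f \<Longrightarrow> comp1 g \<Longrightarrow> compP (\<lambda>x. f x = g x)"
proof -
  assume "comp1 f" "comp1 g"
  then have "comp1 (\<lambda>x. 1 - ((f x - g x) + (g x - f x)))"
    by (intro c1_add c1_minus c1_const)
  moreover have "(\<lambda>x. 1 - ((f x - g x) + (g x - f x))) = (\<lambda>x. if f x = g x then 1 else 0)"
    by auto
  ultimately show ?thesis unfolding compP_def by simp
qed

lemma cP_less: "comp1 f \<Longrightarrow> comp1 g \<Longrightarrow> compP (\<lambda>x. f x < g x)"
proof -
  assume "comp1 f" "comp1 g"
  then have "comp1 (\<lambda>x. 1 - (1 - (g x - f x)))"
    by (intro c1_minus c1_const)
  moreover have "(\<lambda>x. 1 - (1 - (g x - f x))) = (\<lambda>x. if f x < g x then 1 else 0)"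
    by auto
  ultimately show ?thesis unfolding compP_def by simp
qed

lemma cP_le: "comp1 f \<Longrightarrow> comp1 g \<Longrightarrow> compP (\<lambda>x. f x \<le> g x)"
  using cP_less[of f "\<lambda>x. Suc (g x)"] c1_Suc by (simp add: less_Suc_eq_le)

lemma cP_not: "compP P \<Longrightarrow> compP (\<lambda>x. \<not> P x)"
proof -
  assume "compP P"
  then have "comp1 (\<lambda>x. 1 - (if P x then 1 else 0))" unfolding compP_def by (intro c1_minus c1_const)
  moreover have "(\<lambda>x. 1 - (if P x then 1 else 0)) = (\<lambda>x. if \<not> P x then 1 else (0::nat))" by auto
  ultimately show ?thesis unfolding compP_def by simp
qed

lemma cP_conj: "compP P \<Longrightarrow> compP Q \<Longrightarrow> compP (\<lambda>x. P x \<and> Q x)"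
proof -
  assume "compP P" "compP Q"
  then have "comp1 (\<lambda>x. (if P x then 1 else 0) * (if Q x then 1 else 0))" unfolding compP_def by (intro c1_mult)
  moreover have "(\<lambda>x. (if P x then 1 else 0) * (if Q x then 1 else 0)) = (\<lambda>x. if P x \<and> Q x then 1 else (0::nat))" by auto
  ultimately show ?thesis unfolding compP_def by simp
qed

lemma cP_disj: "compP P \<Longrightarrow> compP Q \<Longrightarrow> compP (\<lambda>x. P x \<or> Q x)"
  using cP_not[OF cP_conj[OF cP_not cP_not], of P Q] by simp

lemma cP_imp: "compP P \<Longrightarrow> compP Q \<Longrightarrow> compP (\<lambda>x. P x \<longrightarrow> Q x)"
  using cP_disj[OF cP_not, of P Q] by simp

lemma cP_const: "compP (\<lambda>x. c)"
  unfolding compP_def by (cases c) (auto intro: c1_const)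

lemma sum_ind_pos: "(0 < (\<Sum>i<(n::nat). if P i then 1 else 0::nat)) \<longleftrightarrow> (\<exists>i<n. P i)"
  by (induction n) (auto simp: less_Suc_eq)

lemma cP_ex:
  assumes "compP (\<lambda>p. P (p1 p) (p2 p))" "comp1 k"
  shows "compP (\<lambda>x. \<exists>i<k x. P x i)"
proof -
  from assms have "comp1 (\<lambda>x. \<Sum>i<k x. (if P x i then 1 else 0))"
    unfolding compP_def by (intro c1_sum) auto
  then have "compP (\<lambda>x. 0 < (\<Sum>i<k x. (if P x i then 1 else 0::nat)))"
    using cP_less[OF c1_const] by blast
  then show ?thesis by (simp only: sum_ind_pos)
qed

lemma cP_all:
  assumes "compP (\<lambda>p. P (p1 p) (p2 p))" "comp1 k"
  shows "compP (\<lambda>x. \<forall>i<k x. P x i)"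
proof -
  have "compP (\<lambda>x. \<not> (\<exists>i<k x. \<not> P x i))"
    by (intro cP_not cP_ex[where P="\<lambda>x i. \<not> P x i"] assms)
  then show ?thesis by simp
qed

lemma div_count: "0 < b \<Longrightarrow> (\<Sum>q<a. if (q + 1) * b \<le> a then 1 else 0::nat) = a div b"
proof -
  assume b: "0 < b"
  have "(\<Sum>q<a. if (q + 1) * b \<le> a then 1 else 0::nat) = card {q. q < a \<and> (q+1) * b \<le> a}"
    by (simp add: sum.If_cases Int_def)
  also have "{q. q < a \<and> (q+1) * b \<le> a} = {..<a div b}"
  proof -
    have "(q+1) * b \<le> a \<longleftrightarrow> q < a div b" for q
    proof -
      have "(Suc q) * b \<le> a \<longleftrightarrow> Suc q \<le> a div b" using less_eq_div_iff_mult_less_eq[OF b, of "Suc q" a] by simp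
      then show ?thesis by (simp only: Suc_eq_plus1[symmetric] Suc_le_eq)
    qed
    moreover have "q < a div b \<Longrightarrow> q < a" for q
      using div_le_dividend[of a b] by linarith
    ultimately show ?thesis by auto
  qed
  finally show ?thesis by simp
qed

lemma c1_div: "comp1 f \<Longrightarrow> comp1 g \<Longrightarrow> comp1 (\<lambda>x. f x div g x)"
proof -
  assume f: "comp1 f" and g: "comp1 g"
  have "comp1 (\<lambda>x. if g x = 0 then 0 else (\<Sum>q<f x. if (q + 1) * g x \<le> f x then 1 else 0))"
    apply (intro c1_if cP_eq f g c1_const c1_sum)
    apply (intro c1_if cP_le c1_mult c1_add c1_p1 c1_p2 c1_id c1_const c1_comp[OF f] c1_comp[OF g])
    done
  moreover have "(\<lambda>x. if g x = 0 then 0 else (\<Sum>q<f x. if (q + 1) * g x \<le> f x then 1 else 0)) = (\<lambda>x. f x div g x)"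
    using div_count by fastforce
  ultimately show ?thesis by simp
qed

lemma c1_mod: "comp1 f \<Longrightarrow> comp1 g \<Longrightarrow> comp1 (\<lambda>x. f x mod g x)"
proof -
  assume f: "comp1 f" and g: "comp1 g"
  have "comp1 (\<lambda>x. f x - g x * (f x div g x))"
    by (intro c1_minus c1_mult c1_div f g)
  then show ?thesis by (simp add: minus_mult_div_eq_mod)
qed

lemma cP_odd: "comp1 f \<Longrightarrow> compP (\<lambda>x. odd (f x))"
proof -
  assume f: "comp1 f"
  have "compP (\<lambda>x. f x mod 2 = 1)" by (intro cP_eq c1_mod f c1_const)
  then show ?thesis by (simp add: odd_iff_mod_2_eq_one)
qed


declare decode.simps[simp del]

definition D :: "nat \<Rightarrow> (nat \<Rightarrow> nat \<Rightarrow> nat \<Rightarrow> bool) \<Rightarrow> nat \<Rightarrow> nat \<Rightarrow> nat \<Rightarrow> bool" where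
 "D b M c x y \<longleftrightarrow>
   (c = 0 \<and> y = 0) \<or> (c = 1 \<and> y = Suc x) \<or> (c = 2 \<and> y = x) \<or> (c = 3 \<and> y = p1 x) \<or> (c = 4 \<and> y = p2 x) \<or>
   (5 \<le> c \<and> (c-5) mod 4 = 0 \<and> M (p1 ((c-5) div 4)) x (p1 y) \<and> M (p2 ((c-5) div 4)) x (p2 y)) \<or>
   (5 \<le> c \<and> (c-5) mod 4 = 1 \<and> (\<exists>z<b. M (p2 ((c-5) div 4)) x z \<and> M (p1 ((c-5) div 4)) z y)) \<or>
   (5 \<le> c \<and> (c-5) mod 4 = 2 \<and> ((p2 x = 0 \<and> M (p1 ((c-5) div 4)) (p1 x) y) \<or>
        (0 < p2 x \<and> (\<exists>z<b. M c (pr (p1 x) (p2 x - 1)) z \<and> M (p2 ((c-5) div 4)) (pr (p1 x) (pr (p2 x - 1) z)) y)))) \<or>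
   (5 \<le> c \<and> (c-5) mod 4 = 3 \<and> M ((c-5) div 4) (pr x y) 0 \<and> (\<forall>m<y. \<exists>v<b. M ((c-5) div 4) (pr x m) (Suc v)))"

primrec Lp :: "nat \<Rightarrow> nat \<Rightarrow> nat \<Rightarrow> nat \<Rightarrow> bool" where
  "Lp 0 c x y = False"
| "Lp (Suc s) c x y = (c \<le> s \<and> x \<le> s \<and> y \<le> s \<and> D (Suc s) (Lp s) c x y)"

lemma Lp_bound: "Lp s c x y \<Longrightarrow> c < s \<and> x < s \<and> y < s"
  by (cases s) auto

lemma D_mono: "D b M c x y \<Longrightarrow> b \<le> b' \<Longrightarrow> (\<And>c x y. M c x y \<Longrightarrow> M' c x y) \<Longrightarrow> D b' M' c x y"
  unfolding D_def
  apply (elim disjE) apply (auto intro: order_less_le_trans) by (meson order_less_le_trans)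

lemma Lp_Suc: "Lp s c x y \<Longrightarrow> Lp (Suc s) c x y"
proof (induction s arbitrary: c x y)
  case 0 then show ?case by simp
next
  case (Suc s)
  then show ?case by (auto elim!: D_mono)
qed

lemma Lp_mono: "Lp s c x y \<Longrightarrow> s \<le> s' \<Longrightarrow> Lp s' c x y"
proof -
  assume a: "Lp s c x y" "s \<le> s'"
  from a(2) show ?thesis
  proof (induction rule: dec_induct)
    case base then show ?case using a(1) .
  next
    case (step n) then show ?case by (metis Lp_Suc)
  qed
qed

lemma decode_simps5:
  assumes "5 \<le> c"
  shows "decode c = (if (c-5) mod 4 = 0 then Pair (decode (p1 ((c-5) div 4))) (decode (p2 ((c-5) div 4)))
     else if (c-5) mod 4 = 1 then Comp (decode (p1 ((c-5) div 4))) (decode (p2 ((c-5) div 4)))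
     else if (c-5) mod 4 = 2 then PrimRec (decode (p1 ((c-5) div 4))) (decode (p2 ((c-5) div 4)))
     else Mu (decode ((c-5) div 4)))"
  using assms by (subst decode.simps) (simp add: Let_def p1_def p2_def)

lemma decode_small: "decode 0 = Zero" "decode 1 = Succ" "decode (Suc 0) = Succ" "decode 2 = Ident" "decode 3 = Fst" "decode 4 = Snd"
  by (subst decode.simps; simp)+

lemma Lp_sound: "Lp s c x y \<Longrightarrow> eval (decode c) x y"
proof (induction s arbitrary: c x y)
  case 0 then show ?case by simp
next
  case (Suc s)
  then have Dc: "D (Suc s) (Lp s) c x y" by simp
  let ?k = "(c-5) div 4"
  show ?case using Dc unfolding D_def
  proof (elim disjE conjE)
    assume "c = 0" "y = 0" then show ?thesis by (simp add: decode_small eval.intros)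
  next
    assume "c = 1" "y = Suc x" then show ?thesis by (simp add: decode_small eval.intros)
  next
    assume "c = 2" "y = x" then show ?thesis by (simp add: decode_small eval.intros)
  next
    assume "c = 3" "y = p1 x" then show ?thesis using eval.intros(4)[of "p1 x" "p2 x"] by (simp add: decode_small)
  next
    assume "c = 4" "y = p2 x" then show ?thesis using eval.intros(5)[of "p1 x" "p2 x"] by (simp add: decode_small)
  next
    assume a: "5 \<le> c" "(c-5) mod 4 = 0" "Lp s (p1 ?k) x (p1 y)" "Lp s (p2 ?k) x (p2 y)"
    then have "eval (Pair (decode (p1 ?k)) (decode (p2 ?k))) x (pr (p1 y) (p2 y))"
      using Suc.IH by (intro eval.intros) auto
    then show ?thesis using a by (simp add: decode_simps5)
  next
    assume a: "5 \<le> c" "(c-5) mod 4 = 1" "\<exists>z<Suc s. Lp s (p2 ?k) x z \<and> Lp s (p1 ?k) z y"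
    then obtain z where "Lp s (p2 ?k) x z" "Lp s (p1 ?k) z y" by blast
    then have "eval (Comp (decode (p1 ?k)) (decode (p2 ?k))) x y"
      using Suc.IH by (intro eval.intros) auto
    then show ?thesis using a by (simp add: decode_simps5)
  next
    assume a: "5 \<le> c" "(c-5) mod 4 = 2" "p2 x = 0" "Lp s (p1 ?k) (p1 x) y"
    then have "eval (PrimRec (decode (p1 ?k)) (decode (p2 ?k))) (pr (p1 x) 0) y"
      using Suc.IH by (intro eval.intros) auto
    moreover have "decode c = PrimRec (decode (p1 ?k)) (decode (p2 ?k))" using a by (simp add: decode_simps5)
    moreover have "pr (p1 x) 0 = x" using a(3) pr_p[of x] by simp
    ultimately show ?thesis by simp
  next
    assume a: "5 \<le> c" "(c-5) mod 4 = 2" "0 < p2 x"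
      "\<exists>z<Suc s. Lp s c (pr (p1 x) (p2 x - 1)) z \<and> Lp s (p2 ?k) (pr (p1 x) (pr (p2 x - 1) z)) y"
    then obtain z where z: "Lp s c (pr (p1 x) (p2 x - 1)) z" "Lp s (p2 ?k) (pr (p1 x) (pr (p2 x - 1) z)) y" by blast
    have dc: "decode c = PrimRec (decode (p1 ?k)) (decode (p2 ?k))" using a by (simp add: decode_simps5)
    have "eval (PrimRec (decode (p1 ?k)) (decode (p2 ?k))) (pr (p1 x) (Suc (p2 x - 1))) y"
      using Suc.IH[OF z(1)] Suc.IH[OF z(2)] dc by (intro eval.intros) auto
    then show ?thesis using a dc by simp
  next
    assume a: "5 \<le> c" "(c-5) mod 4 = 3" "Lp s ?k (pr x y) 0" "\<forall>m<y. \<exists>v<Suc s. Lp s ?k (pr x m) (Suc v)"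
    then have "eval (Mu (decode ?k)) x y"
      using Suc.IH by (intro eval.intros) blast+
    then show ?thesis using a by (simp add: decode_simps5)
  qed
qed

lemma decode_lt5: "c < 5 \<Longrightarrow> decode c = (if c = 0 then Zero else if c = 1 then Succ else if c = 2 then Ident else if c = 3 then Fst else Snd)"
  by (subst decode.simps) simp

lemma m4: "(c-5) mod 4 \<noteq> 0 \<Longrightarrow> (c-5) mod 4 \<noteq> 1 \<Longrightarrow> (c-5) mod 4 \<noteq> 2 \<Longrightarrow> (c-5) mod 4 = (3::nat)" by arith

lemma decode_inv:
  "decode c = Zero \<Longrightarrow> c = 0"
  "decode c = Succ \<Longrightarrow> c = 1"
  "decode c = Ident \<Longrightarrow> c = 2"
  "decode c = Fst \<Longrightarrow> c = 3"
  "decode c = Snd \<Longrightarrow> c = 4"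
  "decode c = Pair f g \<Longrightarrow> 5 \<le> c \<and> (c-5) mod 4 = 0 \<and> decode (p1 ((c-5) div 4)) = f \<and> decode (p2 ((c-5) div 4)) = g"
  "decode c = Comp f g \<Longrightarrow> 5 \<le> c \<and> (c-5) mod 4 = 1 \<and> decode (p1 ((c-5) div 4)) = f \<and> decode (p2 ((c-5) div 4)) = g"
  "decode c = PrimRec f g \<Longrightarrow> 5 \<le> c \<and> (c-5) mod 4 = 2 \<and> decode (p1 ((c-5) div 4)) = f \<and> decode (p2 ((c-5) div 4)) = g"
  "decode c = Mu f \<Longrightarrow> 5 \<le> c \<and> (c-5) mod 4 = 3 \<and> decode ((c-5) div 4) = f"
  by (cases "c < 5"; use m4[of c] in \<open>auto simp: decode_lt5 decode_simps5 split: if_splits\<close>)+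

lemma Lp_collect: "(\<forall>m<(n::nat). \<exists>s v. Lp s c (q m) (Suc v)) \<Longrightarrow> \<exists>S. \<forall>m<n. \<exists>v. Lp S c (q m) (Suc v)"
proof (induction n)
  case 0 then show ?case by simp
next
  case (Suc n)
  then obtain S where S: "\<forall>m<n. \<exists>v. Lp S c (q m) (Suc v)" by auto
  from Suc.prems obtain s v where sv: "Lp s c (q n) (Suc v)" by auto
  have "\<forall>m<Suc n. \<exists>v. Lp (S + s) c (q m) (Suc v)"
  proof (intro allI impI)
    fix m assume "m < Suc n"
    then consider "m < n" | "m = n" by linarith
    then show "\<exists>v. Lp (S + s) c (q m) (Suc v)"
    proof cases
      case 1 then show ?thesis using S Lp_mono le_add1 by meson
    next
      case 2 then show ?thesis using sv Lp_mono le_add2 by meson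
    qed
  qed
  then show ?case by blast
qed

lemma Lp_complete: "eval r x y \<Longrightarrow> decode c = r \<Longrightarrow> \<exists>s. Lp s c x y"
proof (induction arbitrary: c rule: eval.induct)
  case (1 x) then have "c = 0" using decode_inv(1) by blast
  then have "Lp (Suc (c + x)) c x 0" by (simp only: Lp.simps) (simp add: D_def)
  then show ?case by blast
next
  case (2 x) then have "c = 1" using decode_inv(2) by blast
  then have "Lp (Suc (c + Suc x)) c x (Suc x)" by (simp only: Lp.simps) (simp add: D_def)
  then show ?case by blast
next
  case (3 x) then have "c = 2" using decode_inv(3) by blast
  then have "Lp (Suc (c + x)) c x x" by (simp only: Lp.simps) (simp add: D_def)
  then show ?case by blast
next
  case (4 a b) then have "c = 3" using decode_inv(4) by blast
  moreover have "a \<le> pr a b" by (simp add: pr_def le_prod_encode_1)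
  ultimately have "Lp (Suc (c + pr a b)) c (pr a b) a" by (simp only: Lp.simps) (simp add: D_def)
  then show ?case by blast
next
  case (5 a b) then have "c = 4" using decode_inv(5) by blast
  moreover have "b \<le> pr a b" by (simp add: pr_def le_prod_encode_2)
  ultimately have "Lp (Suc (c + pr a b)) c (pr a b) b" by (simp only: Lp.simps) (simp add: D_def)
  then show ?case by blast
next
  case (6 f x y g z)
  let ?k = "(c-5) div 4"
  from "6.prems" have c: "5 \<le> c" "(c-5) mod 4 = 0" "decode (p1 ?k) = f" "decode (p2 ?k) = g"
    using decode_inv(6) by blast+
  from "6.IH"(1)[OF c(3)] "6.IH"(2)[OF c(4)] obtain s1 s2 where s: "Lp s1 (p1 ?k) x y" "Lp s2 (p2 ?k) x z" by blast
  let ?s = "s1 + s2 + c + x + pr y z"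
  have "Lp ?s (p1 ?k) x y" "Lp ?s (p2 ?k) x z" using s Lp_mono by (meson le_add1 le_add2 le_trans)+
  then have "Lp (Suc ?s) c x (pr y z)" using c by (simp add: D_def)
  then show ?case by blast
next
  case (7 g x y f z)
  let ?k = "(c-5) div 4"
  from "7.prems" have c: "5 \<le> c" "(c-5) mod 4 = 1" "decode (p1 ?k) = f" "decode (p2 ?k) = g"
    using decode_inv(7) by blast+
  from "7.IH"(1)[OF c(4)] "7.IH"(2)[OF c(3)] obtain s1 s2 where s: "Lp s1 (p2 ?k) x y" "Lp s2 (p1 ?k) y z" by blast
  let ?s = "s1 + s2 + c + x + z"
  have "Lp ?s (p2 ?k) x y" "Lp ?s (p1 ?k) y z" using s Lp_mono by (meson le_add1 le_add2 le_trans)+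
  moreover have "y < Suc ?s" using Lp_bound[OF s(1)] by simp
  ultimately have "Lp (Suc ?s) c x z" using c by (auto simp: D_def)
  then show ?case by blast
next
  case (8 f x y g)
  let ?k = "(c-5) div 4"
  from "8.prems" have c: "5 \<le> c" "(c-5) mod 4 = 2" "decode (p1 ?k) = f" "decode (p2 ?k) = g"
    using decode_inv(8) by blast+
  from "8.IH"(1)[OF c(3)] obtain s1 where s: "Lp s1 (p1 ?k) x y" by blast
  let ?s = "s1 + c + pr x 0 + y"
  have "Lp ?s (p1 ?k) x y" using s Lp_mono by (meson le_add1)
  then have "Lp (Suc ?s) c (pr x 0) y" using c by (simp add: D_def)
  then show ?case by blast
next
  case (9 f g x n y z)
  let ?k = "(c-5) div 4"
  from "9.prems" have c: "5 \<le> c" "(c-5) mod 4 = 2" "decode (p1 ?k) = f" "decode (p2 ?k) = g"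
    using decode_inv(8) by blast+
  from "9.IH"(1)[OF "9.prems"] "9.IH"(2)[OF c(4)] obtain s1 s2 where s: "Lp s1 c (pr x n) y" "Lp s2 (p2 ?k) (pr x (pr n y)) z" by blast
  let ?s = "s1 + s2 + c + pr x (Suc n) + z"
  have "Lp ?s c (pr x n) y" "Lp ?s (p2 ?k) (pr x (pr n y)) z" by (rule Lp_mono[OF s(1)], simp) (rule Lp_mono[OF s(2)], simp)
  moreover have "y < Suc ?s" using Lp_bound[OF s(1)] by simp
  ultimately have "Lp (Suc ?s) c (pr x (Suc n)) z" using c by (auto simp: D_def)
  then show ?case by blast
next
  case (10 f x n)
  let ?k = "(c-5) div 4"
  from "10.prems" have c: "5 \<le> c" "(c-5) mod 4 = 3" "decode ?k = f"
    using decode_inv(9) by blast+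
  from "10.IH"(1)[OF c(3)] obtain s0 where s0: "Lp s0 ?k (pr x n) 0" by blast
  from "10.IH"(2) c(3) have "\<forall>m<n. \<exists>s v. Lp s ?k (pr x m) (Suc v)" by blast
  from Lp_collect[OF this] obtain S where S: "\<forall>m<n. \<exists>v. Lp S ?k (pr x m) (Suc v)" by blast
  let ?s = "s0 + S + c + x + n"
  have "Lp ?s ?k (pr x n) 0" using s0 Lp_mono by (meson le_add1 le_add2 le_trans)
  moreover have "\<forall>m<n. \<exists>v<Suc ?s. Lp ?s ?k (pr x m) (Suc v)"
  proof (intro allI impI)
    fix m assume "m < n"
    with S obtain v where v: "Lp S ?k (pr x m) (Suc v)" by blast
    then have "v < Suc ?s" using Lp_bound[OF v] by simp
    moreover have "Lp ?s ?k (pr x m) (Suc v)" using v Lp_mono by (meson le_add1 le_add2 le_trans)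
    ultimately show "\<exists>v<Suc ?s. Lp ?s ?k (pr x m) (Suc v)" by blast
  qed
  ultimately have "Lp (Suc ?s) c x n" using c by (simp add: D_def)
  then show ?case by blast
qed

lemma eval_Lp: "eval (decode c) x y \<longleftrightarrow> (\<exists>s. Lp s c x y)"
  using Lp_complete Lp_sound by blast

lemma phi_Some: "phi e x = Some y \<longleftrightarrow> eval (decode e) x y"
proof
  assume h: "phi e x = Some y"
  have ex: "\<exists>y. eval (decode e) x y" using h unfolding phi_def by (auto split: if_splits)
  then obtain y' where y': "eval (decode e) x y'" by blast
  then have "(THE y. eval (decode e) x y) = y'" using eval_det by blast
  with h ex have "y = y'" unfolding phi_def by simp
  with y' show "eval (decode e) x y" by simp
next
  assume a: "eval (decode e) x y"
  then have "(THE y. eval (decode e) x y) = y" using eval_det by blast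
  then show "phi e x = Some y" using a unfolding phi_def by auto
qed

lemma phi_None: "phi e x \<noteq> None \<longleftrightarrow> (\<exists>y. eval (decode e) x y)"
proof -
  have "phi e x \<noteq> None \<longleftrightarrow> (\<exists>y. phi e x = Some y)" by simp
  then show ?thesis using phi_Some by simp
qed


definition pr3 :: "nat \<Rightarrow> nat \<Rightarrow> nat \<Rightarrow> nat" where "pr3 c x y = pr c (pr x y)"
definition mem :: "nat \<Rightarrow> nat \<Rightarrow> nat \<Rightarrow> nat \<Rightarrow> bool" where "mem T c x y \<longleftrightarrow> odd (T div 2 ^ pr3 c x y)"
definition tset :: "nat \<Rightarrow> nat set" where "tset s = {t. Lp s (p1 t) (p1 (p2 t)) (p2 (p2 t))}"
definition tab :: "nat \<Rightarrow> nat" where "tab s = set_encode (tset s)"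

lemma pr_mono: "a \<le> c \<Longrightarrow> b \<le> d \<Longrightarrow> pr a b \<le> pr c d"
  unfolding pr_def prod_encode_def triangle_def by (simp add: div_le_mono mult_le_mono add_mono)

lemma pr3_split: "t = pr3 (p1 t) (p1 (p2 t)) (p2 (p2 t))"
  unfolding pr3_def by simp

lemma tset_sub: "tset s \<subseteq> {..pr3 s s s}"
proof
  fix t assume "t \<in> tset s"
  then have "Lp s (p1 t) (p1 (p2 t)) (p2 (p2 t))" by (simp add: tset_def)
  from Lp_bound[OF this] have "pr3 (p1 t) (p1 (p2 t)) (p2 (p2 t)) \<le> pr3 s s s"
    unfolding pr3_def by (intro pr_mono) auto
  then show "t \<in> {..pr3 s s s}" using pr3_split[of t] by simp
qed

lemma finite_tset: "finite (tset s)"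
  using tset_sub finite_subset by blast

lemma mem_tab: "mem (tab s) c x y \<longleftrightarrow> Lp s c x y"
proof -
  have "mem (tab s) c x y \<longleftrightarrow> pr3 c x y \<in> set_decode (tab s)"
    by (simp add: mem_def set_decode_def)
  also have "\<dots> \<longleftrightarrow> pr3 c x y \<in> tset s"
    by (simp add: tab_def set_encode_inverse finite_tset)
  also have "\<dots> \<longleftrightarrow> Lp s c x y" by (simp add: tset_def pr3_def)
  finally show ?thesis .
qed

lemma mem_tab_fun: "mem (tab s) = Lp s"
  using mem_tab by (intro ext) simp

definition Dt :: "nat \<Rightarrow> nat \<Rightarrow> nat \<Rightarrow> bool" where
  "Dt s T t \<longleftrightarrow> p1 t \<le> s \<and> p1 (p2 t) \<le> s \<and> p2 (p2 t) \<le> s \<and> D (Suc s) (mem T) (p1 t) (p1 (p2 t)) (p2 (p2 t))"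

definition step :: "nat \<Rightarrow> nat \<Rightarrow> nat" where
  "step s T = (\<Sum>t<Suc (pr3 s s s). if Dt s T t then 2^t else 0)"

lemma sum_filter_nat: "(\<Sum>t<(B::nat). if P t then g t else 0) = sum g {t. t < B \<and> P t}"
proof -
  have "(\<Sum>t<B. if P t then g t else 0) = sum g ({..<B} \<inter> {t. P t}) + sum (\<lambda>t. 0) ({..<B} \<inter> - {t. P t})"
    by (rule sum.If_cases) simp
  also have "{..<B} \<inter> {t. P t} = {t. t < B \<and> P t}" by auto
  finally show ?thesis by simp
qed

lemma tab_Suc: "tab (Suc s) = step s (tab s)"
proof -
  have "tset (Suc s) = {t. t < Suc (pr3 s s s) \<and> Dt s (tab s) t}"
  proof (rule set_eqI, rule iffI)
    fix t assume "t \<in> tset (Suc s)"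
    then have a: "Lp (Suc s) (p1 t) (p1 (p2 t)) (p2 (p2 t))"
      by (auto simp: tset_def)
    from a have b: "p1 t \<le> s" "p1 (p2 t) \<le> s" "p2 (p2 t) \<le> s" by auto
    then have "pr3 (p1 t) (p1 (p2 t)) (p2 (p2 t)) \<le> pr3 s s s"
      unfolding pr3_def by (intro pr_mono) auto
    then have "t < Suc (pr3 s s s)" using pr3_split[of t] by simp
    then show "t \<in> {t. t < Suc (pr3 s s s) \<and> Dt s (tab s) t}"
      using a by (simp add: Dt_def mem_tab_fun)
  next
    fix t assume "t \<in> {t. t < Suc (pr3 s s s) \<and> Dt s (tab s) t}"
    then show "t \<in> tset (Suc s)" by (simp add: Dt_def mem_tab_fun tset_def)
  qed
  then show ?thesis
    unfolding tab_def step_def set_encode_def by (simp add: sum_filter_nat)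
qed

lemma tab_0: "tab 0 = 0"
  by (simp add: tab_def tset_def set_encode_def)

lemmas c1I = c1_const c1_id c1_Suc c1_p1 c1_p2 c1_pr c1_add c1_mult c1_minus c1_pow2 c1_div c1_mod c1_if
lemmas cPI = cP_eq cP_less cP_le cP_not cP_conj cP_disj cP_imp cP_const cP_ex cP_all cP_odd

lemma cP_Dt:
  assumes s: "comp1 s" and T: "comp1 T" and t: "comp1 t"
  shows "compP (\<lambda>q. Dt (s q) (T q) (t q))"
  unfolding Dt_def D_def mem_def pr3_def
  by (intro cPI c1I c1_comp[OF s] c1_comp[OF T] c1_comp[OF t])

lemma c1_step: "comp1 (\<lambda>p. step (p1 p) (p2 p))"
  unfolding step_def pr3_def
  by (intro c1_sum c1I cP_Dt)

lemma c1_tab: "comp1 tab"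
proof -
  have g: "comp1 (\<lambda>q. step (p1 (p2 q)) (p2 (p2 q)))"
    by (rule c1_comp2[OF c1_step]) (intro c1I)+
  have "comp1 (\<lambda>p. (\<lambda>x n. tab n) (p1 p) (p2 p))"
    by (rule c1_prec[where f="\<lambda>x. 0" and g="\<lambda>q. step (p1 (p2 q)) (p2 (p2 q))"])
       (auto simp: tab_0 tab_Suc intro: c1_const g)
  from c1_comp2[OF this c1_const c1_id] show ?thesis by simp
qed

lemma cP_Lp:
  assumes "comp1 s" "comp1 c" "comp1 x" "comp1 y"
  shows "compP (\<lambda>q. Lp (s q) (c q) (x q) (y q))"
proof -
  have "compP (\<lambda>q. mem (tab (s q)) (c q) (x q) (y q))"
    unfolding mem_def pr3_def
    by (intro cPI c1I c1_comp[OF c1_tab] assms)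
  then show ?thesis by (simp add: mem_tab)
qed


lemma ar: "(5 + 4 * K + 1 - 5) div 4 = (K::nat)" "(5 + 4 * K + 1 - 5) mod 4 = 1"
  "(5 + 4 * K + 2 - 5) div 4 = (K::nat)" "(5 + 4 * K + 2 - 5) mod 4 = 2"
  "(5 + 4 * K - 5) div 4 = (K::nat)" "(5 + 4 * K - 5) mod 4 = 0"
  "(5 + 4 * K + 3 - 5) div 4 = (K::nat)" "(5 + 4 * K + 3 - 5) mod 4 = 3"
  apply simp_all by presburger

lemma decode_encode: "decode (encode r) = r"
proof (induction r)
  case Zero then show ?case by (simp add: decode_small)
next
  case Succ then show ?case by (simp add: decode_small)
next
  case Ident then show ?case by (simp add: decode_small)
next
  case Fst then show ?case by (simp add: decode_small)
next
  case Snd then show ?case by (simp add: decode_small)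
next
  case (Pair f g)
  let ?K = "prod_encode (encode f, encode g)"
  have le: "5 \<le> 5 + 4 * ?K" by simp
  have "decode (5 + 4 * ?K) = Pair (decode (p1 ?K)) (decode (p2 ?K))"
    unfolding decode_simps5[OF le] ar by simp
  then show ?case by (simp only: encode.simps) (simp add: p1_def p2_def Pair.IH)
next
  case (Comp f g)
  let ?K = "prod_encode (encode f, encode g)"
  have le: "5 \<le> 5 + 4 * ?K + 1" by simp
  have "decode (5 + 4 * ?K + 1) = Comp (decode (p1 ?K)) (decode (p2 ?K))"
    unfolding decode_simps5[OF le] ar by simp
  then show ?case by (simp only: encode.simps) (simp add: p1_def p2_def Comp.IH)
next
  case (PrimRec f g)
  let ?K = "prod_encode (encode f, encode g)"
  have le: "5 \<le> 5 + 4 * ?K + 2" by simp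
  have "decode (5 + 4 * ?K + 2) = PrimRec (decode (p1 ?K)) (decode (p2 ?K))"
    unfolding decode_simps5[OF le] ar by simp
  then show ?case by (simp only: encode.simps) (simp add: p1_def p2_def PrimRec.IH)
next
  case (Mu f)
  have le: "5 \<le> 5 + 4 * encode f + 3" by simp
  have "decode (5 + 4 * encode f + 3) = Mu (decode (encode f))"
    unfolding decode_simps5[OF le] ar by simp
  then show ?case by (simp only: encode.simps) (simp add: Mu.IH)
qed

lemma comp_total_of: "comp1 g \<Longrightarrow> computable_total g"
proof -
  assume "comp1 g"
  then obtain r where r: "\<And>x. eval r x (g x)" unfolding comp1_def by blast
  have "phi (encode r) x = Some (g x)" for x
    using r by (simp add: phi_Some decode_encode)
  then show ?thesis unfolding computable_total_def by blast
qed

lemma re_of_compP: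
  assumes "compP P"
  shows "re {x. \<exists>n. P (pr x n)}"
proof -
  have "comp1 (\<lambda>q. 1 - (if P q then 1 else 0))"
    using assms unfolding compP_def by (intro c1_minus c1_const)
  moreover have "(\<lambda>q. 1 - (if P q then 1 else 0)) = (\<lambda>q. if P q then 0 else 1::nat)" by auto
  ultimately have "comp1 (\<lambda>q. if P q then 0 else 1::nat)" by simp
  then obtain r where r: "\<And>q. eval r q (if P q then 0 else 1)"
    unfolding comp1_def by blast
  have "(\<exists>y. eval (Mu r) x y) \<longleftrightarrow> (\<exists>n. P (pr x n))" for x
  proof
    assume "\<exists>y. eval (Mu r) x y"
    then obtain y where "eval (Mu r) x y" by blast
    then have "eval r (pr x y) 0" by (cases rule: eval.cases) auto
    then have "(if P (pr x y) then 0 else 1::nat) = 0" using eval_det r by blast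
    then show "\<exists>n. P (pr x n)" by (auto split: if_splits)
  next
    assume "\<exists>n. P (pr x n)"
    define n where "n = (LEAST n. P (pr x n))"
    have "P (pr x n)" unfolding n_def by (rule LeastI_ex) fact
    then have "eval r (pr x n) 0" using r[of "pr x n"] by simp
    moreover have "\<forall>m<n. \<exists>k. eval r (pr x m) (Suc k)"
    proof (intro allI impI)
      fix m assume "m < n"
      then have "\<not> P (pr x m)" unfolding n_def by (rule not_less_Least)
      then have "eval r (pr x m) (Suc 0)" using r[of "pr x m"] by simp
      then show "\<exists>k. eval r (pr x m) (Suc k)" by blast
    qed
    ultimately show "\<exists>y. eval (Mu r) x y" by (blast intro: eval.intros)
  qed
  then have "W (encode (Mu r)) = {x. \<exists>n. P (pr x n)}"
    unfolding W_def dom_def phi_None decode_encode by simp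
  then show ?thesis unfolding re_def by metis
qed

lemma collect_mono:
  fixes Q :: "nat \<Rightarrow> nat \<Rightarrow> bool"
  assumes "\<forall>m<(n::nat). \<exists>s. Q m s" and "\<And>m s s'. Q m s \<Longrightarrow> s \<le> s' \<Longrightarrow> Q m s'"
  shows "\<exists>S. \<forall>m<n. Q m S"
  using assms(1)
proof (induction n)
  case 0 then show ?case by simp
next
  case (Suc n)
  then obtain S where S: "\<forall>m<n. Q m S" by auto
  from Suc.prems obtain s where s: "Q n s" by auto
  have "\<forall>m<Suc n. Q m (S + s)"
    using S s assms(2) by (metis le_add1 le_add2 less_Suc_eq)
  then show ?case by blast
qed

definition Iv :: "nat \<Rightarrow> nat \<Rightarrow> bool" where "Iv e y \<longleftrightarrow> e*e + 2*e \<le> y \<and> y < e*e + 4*e + 3"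
definition Big :: "nat \<Rightarrow> nat \<Rightarrow> bool" where "Big i y \<longleftrightarrow> i*i + 4*i + 3 \<le> y"
definition SetS :: "nat \<Rightarrow> nat \<Rightarrow> nat \<Rightarrow> bool" where "SetS s i y \<longleftrightarrow> Big i y \<and> (\<exists>v<s. Lp s i y v)"
definition QS :: "nat \<Rightarrow> nat \<Rightarrow> nat \<Rightarrow> bool" where
  "QS i s y \<longleftrightarrow> SetS s i y \<and> (\<forall>y'<y. \<not> SetS s i y') \<and> (\<forall>s'<s. \<forall>y'<s'. \<not> SetS s' i y')"
definition AD :: "nat \<Rightarrow> bool" where
  "AD z \<longleftrightarrow> (\<exists>e. Iv e z \<and> phi e z = Some 0 \<and> (\<forall>z'<z. Iv e z' \<longrightarrow> (\<exists>v. v \<noteq> 0 \<and> phi e z' = Some v)))"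
definition PD :: "nat \<Rightarrow> nat \<Rightarrow> bool" where
  "PD s z \<longleftrightarrow> (\<exists>e<s. Iv e z \<and> Lp s e z 0 \<and> (\<forall>z'<z. Iv e z' \<longrightarrow> (\<exists>v<s. 0 < v \<and> Lp s e z' v)))"
definition Aset :: "nat set" where "Aset = {y. (\<exists>i s. QS i s y) \<or> AD y}"

lemma phi_Lp: "phi e x = Some y \<longleftrightarrow> (\<exists>s. Lp s e x y)"
  by (simp add: phi_Some eval_Lp)

lemma AD_PD: "AD z \<longleftrightarrow> (\<exists>s. PD s z)"
proof
  assume "AD z"
  then obtain e where e: "Iv e z" "phi e z = Some 0" "\<forall>z'<z. Iv e z' \<longrightarrow> (\<exists>v. v \<noteq> 0 \<and> phi e z' = Some v)"
    unfolding AD_def by blast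
  from e(2) obtain s0 where s0: "Lp s0 e z 0" by (auto simp: phi_Lp)
  have "\<forall>m<z. \<exists>s. (Iv e m \<longrightarrow> (\<exists>v<s. 0 < v \<and> Lp s e m v))"
  proof (intro allI impI)
    fix m assume "m < z"
    show "\<exists>s. Iv e m \<longrightarrow> (\<exists>v<s. 0 < v \<and> Lp s e m v)"
    proof (cases "Iv e m")
      case True
      with e(3) \<open>m < z\<close> obtain v where "v \<noteq> 0" "phi e m = Some v" by blast
      then obtain s where "Lp s e m v" by (auto simp: phi_Lp)
      then show ?thesis using \<open>v \<noteq> 0\<close> Lp_bound by blast
    qed simp
  qed
  moreover have "Iv e m \<longrightarrow> (\<exists>v<s'. 0 < v \<and> Lp s' e m v)"
    if h: "Iv e m \<longrightarrow> (\<exists>v<s. 0 < v \<and> Lp s e m v)" and ss: "s \<le> s'" for m s s'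
  proof
    assume "Iv e m"
    with h obtain v where v: "v < s" "0 < v" "Lp s e m v" by blast
    from v(1) ss have "v < s'" by simp
    moreover from Lp_mono[OF v(3) ss] have "Lp s' e m v" .
    ultimately show "\<exists>v<s'. 0 < v \<and> Lp s' e m v" using v(2) by blast
  qed
  ultimately obtain S where S: "\<forall>m<z. Iv e m \<longrightarrow> (\<exists>v<S. 0 < v \<and> Lp S e m v)"
    using collect_mono[of z "\<lambda>m s. Iv e m \<longrightarrow> (\<exists>v<s. 0 < v \<and> Lp s e m v)"] by blast
  let ?s = "s0 + S + Suc e"
  have "Lp ?s e z 0" using Lp_mono[OF s0, of ?s] by simp
  moreover have "\<forall>z'<z. Iv e z' \<longrightarrow> (\<exists>v<?s. 0 < v \<and> Lp ?s e z' v)"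
  proof (intro allI impI)
    fix z' assume "z' < z" "Iv e z'"
    with S obtain v where "v < S" "0 < v" "Lp S e z' v" by blast
    moreover have "S \<le> ?s" by simp
    ultimately have "v < ?s" "Lp ?s e z' v" using Lp_mono[of S e z' v ?s] by simp_all
    then show "\<exists>v<?s. 0 < v \<and> Lp ?s e z' v" using \<open>0 < v\<close> by blast
  qed
  moreover have "e < ?s" by simp
  ultimately have "PD ?s z" unfolding PD_def using e(1) by blast
  then show "\<exists>s. PD s z" by blast
next
  assume "\<exists>s. PD s z"
  then obtain s e where a: "Iv e z" "Lp s e z 0" "\<forall>z'<z. Iv e z' \<longrightarrow> (\<exists>v<s. 0 < v \<and> Lp s e z' v)"
    unfolding PD_def by blast
  have "phi e z = Some 0" using a(2) phi_Lp by blast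
  moreover have "\<forall>z'<z. Iv e z' \<longrightarrow> (\<exists>v. v \<noteq> 0 \<and> phi e z' = Some v)"
  proof (intro allI impI)
    fix z' assume "z' < z" "Iv e z'"
    with a(3) obtain v where "0 < v" "Lp s e z' v" by blast
    then show "\<exists>v. v \<noteq> 0 \<and> phi e z' = Some v" using phi_Lp by blast
  qed
  ultimately show "AD z" unfolding AD_def using a(1) by blast
qed

definition PA :: "nat \<Rightarrow> bool" where
  "PA q \<longleftrightarrow> QS (p1 (p2 q)) (p2 (p2 q)) (p1 q) \<or> PD (p2 q) (p1 q)"

lemma Aset_PA: "Aset = {x. \<exists>n. PA (pr x n)}"
proof -
  have "(\<exists>i s. QS i s x) \<longleftrightarrow> (\<exists>n. QS (p1 n) (p2 n) x)" for x
  proof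
    assume "\<exists>i s. QS i s x"
    then obtain i s where "QS i s x" by blast
    then show "\<exists>n. QS (p1 n) (p2 n) x" by (intro exI[of _ "pr i s"]) simp
  qed blast
  then show ?thesis unfolding Aset_def PA_def AD_PD by auto
qed

lemma re_Aset: "re Aset"
proof -
  have "compP PA"
    unfolding PA_def QS_def SetS_def Big_def PD_def Iv_def
    by (intro cPI c1I cP_Lp)
  then show ?thesis unfolding Aset_PA by (rule re_of_compP)
qed

lemma Iv_key: "(e::nat) < e' \<Longrightarrow> e*e + 4*e + 3 \<le> e'*e' + 2*e'"
proof -
  assume "e < e'"
  then have h: "e+1 \<le> e'" by simp
  then have "(e+1)*(e+1) \<le> e'*e'" by (intro mult_le_mono)
  then show ?thesis using h by (simp add: algebra_simps)
qed

lemma Iv_disj: "Iv e y \<Longrightarrow> Iv e' y \<Longrightarrow> e = e'"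
proof (rule ccontr)
  assume a: "Iv e y" "Iv e' y" "e \<noteq> e'"
  then consider "e < e'" | "e' < e" by linarith
  then show False
  proof cases
    case 1 from Iv_key[OF 1] a show False unfolding Iv_def by linarith
  next
    case 2 from Iv_key[OF 2] a show False unfolding Iv_def by linarith
  qed
qed

lemma Iv_set: "{y. Iv e y} = {e*e+2*e..<e*e+4*e+3}" by (auto simp: Iv_def)

lemma card_Iv: "card {y. Iv e y} = 2*e+3" by (simp add: Iv_set)

lemma finite_Iv: "finite {y. Iv e y}" by (simp add: Iv_set)

lemma QS_lt: "QS i s y \<Longrightarrow> y < s"
  unfolding QS_def SetS_def using Lp_bound by blast

lemma QS_unique: "QS i s y \<Longrightarrow> QS i s' y' \<Longrightarrow> y = y'"
proof -
  assume a: "QS i s y" "QS i s' y'"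
  have "s = s'"
  proof (rule ccontr)
    assume "s \<noteq> s'"
    then consider "s < s'" | "s' < s" by linarith
    then show False
    proof cases
      case 1 then show False using a QS_lt[OF a(1)] unfolding QS_def by blast
    next
      case 2 then show False using a QS_lt[OF a(2)] unfolding QS_def by blast
    qed
  qed
  show "y = y'"
  proof (rule ccontr)
    assume "y \<noteq> y'"
    then consider "y < y'" | "y' < y" by linarith
    then show False
    proof cases
      case 1 then show False using a \<open>s = s'\<close> unfolding QS_def by blast
    next
      case 2 then show False using a \<open>s = s'\<close> unfolding QS_def by blast
    qed
  qed
qed

lemma QS_Iv_lt: "QS i s y \<Longrightarrow> Iv e y \<Longrightarrow> i < e"
proof (rule ccontr)
  assume a: "QS i s y" "Iv e y" "\<not> i < e"
  then have "e \<le> i" by simp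
  then have "e*e \<le> i*i" by (intro mult_le_mono)
  moreover from a(1) have "i*i + 4*i + 3 \<le> y" unfolding QS_def SetS_def Big_def by blast
  ultimately show False using a(2) \<open>e \<le> i\<close> unfolding Iv_def by linarith
qed

lemma AD_unique: "AD y \<Longrightarrow> AD y' \<Longrightarrow> Iv e y \<Longrightarrow> Iv e y' \<Longrightarrow> y = y'"
proof -
  have main: "False" if a: "AD y" "AD y'" "Iv e y" "Iv e y'" "y < y'" for y y'
  proof -
    from a(1) obtain e1 where e1: "Iv e1 y" "phi e1 y = Some 0" unfolding AD_def by blast
    from a(2) obtain e2 where e2: "Iv e2 y'" "\<forall>z'<y'. Iv e2 z' \<longrightarrow> (\<exists>v. v \<noteq> 0 \<and> phi e2 z' = Some v)"
      unfolding AD_def by blast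
    have "e1 = e" "e2 = e" using Iv_disj e1(1) e2(1) a(3,4) by blast+
    then show False using e1 e2(2) a(3,5) by auto
  qed
  assume "AD y" "AD y'" "Iv e y" "Iv e y'"
  then show "y = y'" using main[of y y'] main[of y' y] by (cases "y < y'"; cases "y' < y") auto
qed

lemma card_sub1: "finite S \<Longrightarrow> (\<And>a b. a \<in> S \<Longrightarrow> b \<in> S \<Longrightarrow> a = b) \<Longrightarrow> card S \<le> 1"
  using card_le_Suc0_iff_eq[of S] by (simp; blast)

lemma exists_out: "\<exists>y. Iv e y \<and> y \<notin> Aset"
proof (rule ccontr)
  assume "\<not> ?thesis"
  then have sub: "{y. Iv e y} \<subseteq> Aset" by auto
  let ?I = "{y. Iv e y}"
  let ?X = "{y\<in>?I. AD y}"
  let ?Y = "\<lambda>i. {y\<in>?I. \<exists>s. QS i s y}"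
  have "?I \<subseteq> ?X \<union> (\<Union>i\<in>{..<e}. ?Y i)"
  proof
    fix y assume y: "y \<in> ?I"
    with sub have "y \<in> Aset" by blast
    then have "(\<exists>i s. QS i s y) \<or> AD y" unfolding Aset_def by simp
    then show "y \<in> ?X \<union> (\<Union>i\<in>{..<e}. ?Y i)"
    proof
      assume "\<exists>i s. QS i s y"
      then obtain i s where q: "QS i s y" by blast
      with y have "i < e" using QS_Iv_lt by blast
      with q y show ?thesis by blast
    next
      assume "AD y" with y show ?thesis by blast
    qed
  qed
  moreover have finU: "finite (?X \<union> (\<Union>i\<in>{..<e}. ?Y i))"
    using finite_Iv by auto
  ultimately have "card ?I \<le> card (?X \<union> (\<Union>i\<in>{..<e}. ?Y i))"
    by (rule card_mono[rotated])
  also have "\<dots> \<le> card ?X + card (\<Union>i\<in>{..<e}. ?Y i)" by (rule card_Un_le)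
  also have "card ?X \<le> 1"
  proof (rule card_sub1)
    show "finite ?X" using finite_Iv by auto
    fix a b assume "a \<in> ?X" "b \<in> ?X"
    then show "a = b" using AD_unique[of a b e] by blast
  qed
  also have "card (\<Union>i\<in>{..<e}. ?Y i) \<le> (\<Sum>i\<in>{..<e}. card (?Y i))" by (rule card_UN_le) simp
  also have "\<dots> \<le> (\<Sum>i\<in>{..<e}. 1)"
  proof (rule sum_mono)
    fix i show "card (?Y i) \<le> 1"
    proof (rule card_sub1)
      show "finite (?Y i)" using finite_Iv by auto
      fix a b assume "a \<in> ?Y i" "b \<in> ?Y i"
      then obtain s s' where "QS i s a" "QS i s' b" by blast
      then show "a = b" by (rule QS_unique)
    qed
  qed
  finally have "card ?I \<le> 1 + e" by simp
  then show False using card_Iv[of e] by simp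
qed

lemma infinite_compl: "infinite (- Aset)"
proof
  assume "finite (- Aset)"
  then obtain m where m: "\<forall>n\<in>- Aset. n \<le> m" using finite_nat_set_iff_bounded_le by blast
  obtain y where y: "Iv (Suc m) y" "y \<notin> Aset" using exists_out by blast
  from y(1) have "Suc m \<le> y" unfolding Iv_def by simp
  moreover from m y(2) have "y \<le> m" by simp
  ultimately show False by simp
qed

lemma W_Lp: "y \<in> W e \<longleftrightarrow> (\<exists>s v. Lp s e y v)"
  unfolding W_def dom_def using phi_None eval_Lp by auto

lemma simple_Aset: "simple Aset"
  unfolding simple_def
proof (intro conjI re_Aset infinite_compl allI impI)
  fix i assume sub: "W i \<subseteq> - Aset"
  show "finite (W i)"
  proof (rule ccontr)
    assume inf: "infinite (W i)"
    then obtain y where y: "y \<in> W i" "i*i + 4*i + 3 < y"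
      using finite_nat_set_iff_bounded_le[of "W i"] by (meson not_le)
    then obtain s v where sv: "Lp s i y v" using W_Lp by blast
    then have "SetS s i y" unfolding SetS_def Big_def using Lp_bound[OF sv] sv y(2) by auto
    then have ex: "\<exists>s y. SetS s i y" by blast
    define s0 where "s0 = (LEAST s. \<exists>y. SetS s i y)"
    have ex0: "\<exists>y. SetS s0 i y" unfolding s0_def using ex by (rule LeastI_ex)
    define y0 where "y0 = (LEAST y. SetS s0 i y)"
    have S0: "SetS s0 i y0" unfolding y0_def using ex0 by (rule LeastI_ex)
    have "QS i s0 y0" unfolding QS_def
    proof (intro conjI S0 allI impI)
      fix y' assume "y' < y0" then show "\<not> SetS s0 i y'" unfolding y0_def by (rule not_less_Least)
    next
      fix s' y' assume "s' < s0" "y' < s'"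
      then have "\<not> (\<exists>y. SetS s' i y)" unfolding s0_def using not_less_Least by blast
      then show "\<not> SetS s' i y'" by blast
    qed
    then have "y0 \<in> Aset" unfolding Aset_def by blast
    moreover have "y0 \<in> W i" using S0 unfolding SetS_def W_Lp by blast
    ultimately show False using sub by blast
  qed
qed

lemma geom: "a \<le> b \<Longrightarrow> (\<Sum>i\<in>{a..<b}. 2^i) = (2::nat)^b - 2^a"
proof (induction b rule: dec_induct)
  case base then show ?case by simp
next
  case (step n)
  have "(2::nat)^a \<le> 2^n" using step(1) by (simp add: power_increasing)
  then show ?case using step by simp
qed

lemma canon_Iv: "canon_index {y. Iv e y} = 2^(e*e+4*e+3) - 2^(e*e+2*e)"
  unfolding canon_index_def Iv_set by (rule geom) simp

lemma weu_Aset: "D_weu Aset"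
  unfolding D_weu_def
proof (intro conjI re_Aset exI[of _ "\<lambda>e. {y. Iv e y}"] allI impI)
  show "computable_fin (\<lambda>e. {y. Iv e y})"
    unfolding computable_fin_def
  proof (intro conjI allI finite_Iv)
    have "comp1 (\<lambda>e. 2^(e*e+4*e+3) - 2^(e*e+2*e))" by (intro c1I)
    then show "computable_total (\<lambda>e. canon_index {y. Iv e y})"
      unfolding canon_Iv by (rule comp_total_of)
  qed
next
  fix e assume tot: "\<forall>z\<in>{y. Iv e y}. phi e z \<noteq> None"
  show "\<exists>z\<in>{y. Iv e y}. phi e z \<noteq> Some (if z \<in> Aset then 1 else 0)"
  proof (cases "\<exists>z. Iv e z \<and> phi e z = Some 0")
    case True
    define z0 where "z0 = (LEAST z. Iv e z \<and> phi e z = Some 0)"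
    have z0: "Iv e z0 \<and> phi e z0 = Some 0" unfolding z0_def using True by (rule LeastI_ex)
    have "\<forall>z'<z0. Iv e z' \<longrightarrow> (\<exists>v. v \<noteq> 0 \<and> phi e z' = Some v)"
    proof (intro allI impI)
      fix z' assume "z' < z0" "Iv e z'"
      then have "\<not> (Iv e z' \<and> phi e z' = Some 0)" unfolding z0_def using not_less_Least by blast
      with \<open>Iv e z'\<close> have "phi e z' \<noteq> Some 0" by blast
      moreover from tot \<open>Iv e z'\<close> obtain v where "phi e z' = Some v" by auto
      ultimately show "\<exists>v. v \<noteq> 0 \<and> phi e z' = Some v" by auto
    qed
    then have "AD z0" unfolding AD_def using z0 by blast
    then have "z0 \<in> Aset" unfolding Aset_def by blast
    then show ?thesis using z0 by auto
  next
    case False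
    obtain y where y: "Iv e y" "y \<notin> Aset" using exists_out by blast
    from tot y(1) obtain v where v: "phi e y = Some v" by auto
    with False y(1) have "v \<noteq> 0" by auto
    then show ?thesis using y v by auto
  qed
qed

theorem mainTheorem9:
  shows "\<exists>A. simple A \<and> D_weu A"
  using simple_Aset weu_Aset by blast


end
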